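(* Let $\mathfrak{g}$ be a Leibniz algebra and consider a commutative diagram of Leibniz algebras with exact rows $$\begin{array}{ccccccccc}0\to&\mathfrak{m}_1&\to&\mathfrak{p}_1&\to&\mathfrak{g}&\to0\\ &\downarrow\alpha&&\downarrow\beta&&\downarrow\gamma&\\ 0\to&\mathfrak{m}_2&\to&\mathfrak{p}_2&\to&\mathfrak{g}&\to0\end{array}$$ such that the bottom row is a $\mathrm{Lie}$-stem extension. If $\gamma$ is surjective, then $\beta$ is surjective.
   Context: Fix a field $\mathbb{K}$ with $\frac12\in\mathbb{K}$. A Leibniz algebra is a $\mathbb{K}$-vector space with a bilinear bracket satisfying $[x,[y,z]]=[[x,y],z]-[[x,z],y]$. $\mathfrak{p}^{\mathrm{ann}}$ is the span of all $[x,x]$, $\mathfrak{p}_{\mathrm{Lie}}=\mathfrak{p}/\mathfrak{p}^{\mathrm{ann}}$. $Z_{\mathrm{Lie}}(\mathfrak{p})=\{z:[x,z]+[z,x]=0\ \forall x\}$. An extension $0\to\mathfrak{m}\to\mathfrak{p}\to\mathfrak{g}\to0$ is a $\mathrm{Lie}$-stem extension if $\mathfrak{m}\subseteq Z_{\mathrm{Lie}}(\mathfrak{p})$ and the induced map $\mathfrak{p}_{\mathrm{Lie}}\to\mathfrak{g}_{\mathrm{Lie}}$ is an isomorphism (equivalently, $\mathfrak{m}\subseteq Z_{\mathrm{Lie}}(\mathfrak{p})\cap\mathfrak{p}^{\mathrm{ann}}$). *)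

theory Defs
  imports Complex_Main
begin

definition leibniz_algebra ::
  "('k::field \<Rightarrow> 'v::ab_group_add \<Rightarrow> 'v) \<Rightarrow> ('v \<Rightarrow> 'v \<Rightarrow> 'v) \<Rightarrow> bool" where
  "leibniz_algebra sc br \<longleftrightarrow>
     module sc \<and>
     (\<forall>x y z. br (x + y) z = br x z + br y z) \<and>
     (\<forall>x y z. br x (y + z) = br x y + br x z) \<and>
     (\<forall>c x y. br (sc c x) y = sc c (br x y)) \<and>
     (\<forall>c x y. br x (sc c y) = sc c (br x y)) \<and>
     (\<forall>x y z. br x (br y z) = br (br x y) z - br (br x z) y)"

definition leibniz_hom ::
  "('k::field \<Rightarrow> 'v::ab_group_add \<Rightarrow> 'v) \<Rightarrow> ('v \<Rightarrow> 'v \<Rightarrow> 'v) \<Rightarrow>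
   ('k \<Rightarrow> 'w::ab_group_add \<Rightarrow> 'w) \<Rightarrow> ('w \<Rightarrow> 'w \<Rightarrow> 'w) \<Rightarrow> ('v \<Rightarrow> 'w) \<Rightarrow> bool" where
  "leibniz_hom sc1 br1 sc2 br2 f \<longleftrightarrow>
     (\<forall>x y. f (x + y) = f x + f y) \<and>
     (\<forall>c x. f (sc1 c x) = sc2 c (f x)) \<and>
     (\<forall>x y. f (br1 x y) = br2 (f x) (f y))"

definition short_exact ::
  "('m::ab_group_add \<Rightarrow> 'p::ab_group_add) \<Rightarrow> ('p \<Rightarrow> 'g::ab_group_add) \<Rightarrow> bool" where
  "short_exact i q \<longleftrightarrow> inj i \<and> surj q \<and> range i = {x. q x = 0}"

definition lie_center :: "('v::ab_group_add \<Rightarrow> 'v \<Rightarrow> 'v) \<Rightarrow> 'v set" where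
  "lie_center br = {z. \<forall>x. br x z + br z x = 0}"

definition leib_ann ::
  "('k::field \<Rightarrow> 'v::ab_group_add \<Rightarrow> 'v) \<Rightarrow> ('v \<Rightarrow> 'v \<Rightarrow> 'v) \<Rightarrow> 'v set" where
  "leib_ann sc br = module.span sc (range (\<lambda>x. br x x))"

text \<open>Lie-stem extension (in the equivalent form m \<subseteq> Z_Lie(p) \<inter> p^ann).\<close>
definition lie_stem_extension ::
  "('k::field \<Rightarrow> 'p::ab_group_add \<Rightarrow> 'p) \<Rightarrow> ('p \<Rightarrow> 'p \<Rightarrow> 'p) \<Rightarrow>
   ('m::ab_group_add \<Rightarrow> 'p) \<Rightarrow> ('p \<Rightarrow> 'g::ab_group_add) \<Rightarrow> bool" where
  "lie_stem_extension sc br i q \<longleftrightarrow>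
     short_exact i q \<and> range i \<subseteq> lie_center br \<inter> leib_ann sc br"

end

theory Submission
  imports Defs
begin

theorem mainTheorem15:
  fixes scm1 :: "'k::field \<Rightarrow> 'm1::ab_group_add \<Rightarrow> 'm1" and brm1 :: "'m1 \<Rightarrow> 'm1 \<Rightarrow> 'm1"
    and scp1 :: "'k \<Rightarrow> 'p1::ab_group_add \<Rightarrow> 'p1" and brp1 :: "'p1 \<Rightarrow> 'p1 \<Rightarrow> 'p1"
    and scm2 :: "'k \<Rightarrow> 'm2::ab_group_add \<Rightarrow> 'm2" and brm2 :: "'m2 \<Rightarrow> 'm2 \<Rightarrow> 'm2"
    and scp2 :: "'k \<Rightarrow> 'p2::ab_group_add \<Rightarrow> 'p2" and brp2 :: "'p2 \<Rightarrow> 'p2 \<Rightarrow> 'p2"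
    and scg :: "'k \<Rightarrow> 'g::ab_group_add \<Rightarrow> 'g" and brg :: "'g \<Rightarrow> 'g \<Rightarrow> 'g"
    and i1 :: "'m1 \<Rightarrow> 'p1" and q1 :: "'p1 \<Rightarrow> 'g"
    and i2 :: "'m2 \<Rightarrow> 'p2" and q2 :: "'p2 \<Rightarrow> 'g"
    and \<alpha> :: "'m1 \<Rightarrow> 'm2" and \<beta> :: "'p1 \<Rightarrow> 'p2" and \<gamma> :: "'g \<Rightarrow> 'g"
  assumes char: "(2::'k) \<noteq> 0"
    and L: "leibniz_algebra scm1 brm1" "leibniz_algebra scp1 brp1"
      "leibniz_algebra scm2 brm2" "leibniz_algebra scp2 brp2" "leibniz_algebra scg brg"
    and H: "leibniz_hom scm1 brm1 scp1 brp1 i1" "leibniz_hom scp1 brp1 scg brg q1"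
      "leibniz_hom scm2 brm2 scp2 brp2 i2" "leibniz_hom scp2 brp2 scg brg q2"
      "leibniz_hom scm1 brm1 scm2 brm2 \<alpha>" "leibniz_hom scp1 brp1 scp2 brp2 \<beta>"
      "leibniz_hom scg brg scg brg \<gamma>"
    and top_exact: "short_exact i1 q1"
    and bottom_stem: "lie_stem_extension scp2 brp2 i2 q2"
    and comm1: "\<beta> \<circ> i1 = i2 \<circ> \<alpha>"
    and comm2: "q2 \<circ> \<beta> = \<gamma> \<circ> q1"
    and gamma_surj: "surj \<gamma>"
  shows "surj \<beta>"
proof -
  have addz: "\<And>(f::'a::ab_group_add \<Rightarrow> 'b::ab_group_add). (\<forall>x y. f (x + y) = f x + f y) \<Longrightarrow> f 0 = 0"
  proof -
    fix f :: "'a::ab_group_add \<Rightarrow> 'b::ab_group_add"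
    assume a: "\<forall>x y. f (x + y) = f x + f y"
    have "f (0 + 0) = f 0 + f 0" using a by blast
    thus "f 0 = 0" by simp
  qed
  have addm: "\<And>(f::'a::ab_group_add \<Rightarrow> 'b::ab_group_add) x y. (\<forall>x y. f (x + y) = f x + f y) \<Longrightarrow> f (x - y) = f x - f y"
  proof -
    fix f :: "'a::ab_group_add \<Rightarrow> 'b::ab_group_add" and x y
    assume a: "\<forall>x y. f (x + y) = f x + f y"
    have "f x = f ((x - y) + y)" by simp
    also have "\<dots> = f (x - y) + f y" using a by blast
    finally show "f (x - y) = f x - f y" by (simp add: algebra_simps)
  qed
  have badd: "\<forall>x y. \<beta> (x + y) = \<beta> x + \<beta> y" and bsc: "\<forall>c x. \<beta> (scp1 c x) = scp2 c (\<beta> x)"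
    and bbr: "\<forall>x y. \<beta> (brp1 x y) = brp2 (\<beta> x) (\<beta> y)"
    using H(6) unfolding leibniz_hom_def by auto
  have q2add: "\<forall>x y. q2 (x + y) = q2 x + q2 y" using H(4) unfolding leibniz_hom_def by auto
  have mod2: "module scp2" using L(4) unfolding leibniz_algebra_def by auto
  have bradd1: "\<forall>x y z. brp2 (x + y) z = brp2 x z + brp2 y z"
    and bradd2: "\<forall>x y z. brp2 x (y + z) = brp2 x y + brp2 x z"
    using L(4) unfolding leibniz_algebra_def by auto
  have se2: "short_exact i2 q2" and Mc: "range i2 \<subseteq> lie_center brp2 \<inter> leib_ann scp2 brp2"
    using bottom_stem unfolding lie_stem_extension_def by auto
  have ker2: "range i2 = {x. q2 x = 0}" using se2 unfolding short_exact_def by auto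
  have q1s: "surj q1" using top_exact unfolding short_exact_def by auto
  define B where "B = range \<beta>"
  have subB: "module.subspace scp2 B"
    unfolding module.subspace_def[OF mod2] B_def
  proof (intro conjI ballI allI)
    show "0 \<in> range \<beta>" using addz[OF badd] by (metis rangeI)
  next
    fix x y assume "x \<in> range \<beta>" "y \<in> range \<beta>"
    then obtain a b where "x = \<beta> a" "y = \<beta> b" by auto
    thus "x + y \<in> range \<beta>" using badd by (metis rangeI)
  next
    fix c x assume "x \<in> range \<beta>"
    then obtain a where "x = \<beta> a" by auto
    thus "scp2 c x \<in> range \<beta>" using bsc by (metis rangeI)
  qed
  have dec: "\<And>y. \<exists>a m. y = \<beta> a + i2 m"
  proof -
    fix y
    obtain g where g: "q2 y = \<gamma> g" using gamma_surj by (metis surjD)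
    obtain a where a: "g = q1 a" using q1s by (metis surjD)
    have "q2 (\<beta> a) = \<gamma> (q1 a)" using comm2 by (metis comp_apply)
    hence "q2 (y - \<beta> a) = 0" using addm[OF q2add] g a by simp
    then obtain m where "y - \<beta> a = i2 m" using ker2 by blast
    hence "y = \<beta> a + i2 m" by (simp add: algebra_simps)
    thus "\<exists>a m. y = \<beta> a + i2 m" by blast
  qed
  have half: "\<And>v::'p2. v + v = 0 \<Longrightarrow> v = 0"
  proof -
    fix v :: 'p2 assume v: "v + v = 0"
    have "scp2 (1/2) (v + v) = scp2 (1/2) v + scp2 (1/2) v"
      by (rule module.scale_right_distrib[OF mod2])
    also have "\<dots> = scp2 (1/2 + 1/2) v"
      by (rule module.scale_left_distrib[OF mod2, symmetric])
    also have "(1/2 + 1/2 :: 'k) = 1" using char by (simp add: field_simps)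
    also have "scp2 1 v = v" by (rule module.scale_one[OF mod2])
    finally show "v = 0" using v module.scale_zero_right[OF mod2] by simp
  qed
  have sq: "\<And>y. brp2 y y \<in> B"
  proof -
    fix y
    obtain a m where y: "y = \<beta> a + i2 m" using dec by blast
    have mc: "i2 m \<in> lie_center brp2" using Mc by blast
    hence c1: "brp2 (\<beta> a) (i2 m) + brp2 (i2 m) (\<beta> a) = 0"
      and c2: "brp2 (i2 m) (i2 m) + brp2 (i2 m) (i2 m) = 0"
      unfolding lie_center_def by auto
    have z: "brp2 (i2 m) (i2 m) = 0" using half c2 by blast
    have "brp2 y y = brp2 (\<beta> a) (\<beta> a) + (brp2 (\<beta> a) (i2 m) + brp2 (i2 m) (\<beta> a)) + brp2 (i2 m) (i2 m)"
      unfolding y using bradd1 bradd2 by (simp add: algebra_simps)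
    also have "\<dots> = \<beta> (brp1 a a)" using c1 z bbr by simp
    finally show "brp2 y y \<in> B" unfolding B_def by simp
  qed
  have annB: "leib_ann scp2 brp2 \<subseteq> B"
  proof -
    have "range (\<lambda>x. brp2 x x) \<subseteq> B" using sq by auto
    thus ?thesis unfolding leib_ann_def by (rule module.span_minimal[OF mod2 _ subB])
  qed
  show ?thesis
  proof (rule surjI[where f = "\<lambda>y. SOME x. \<beta> x = y"])
    fix y
    obtain a m where y: "y = \<beta> a + i2 m" using dec by blast
    have "i2 m \<in> B" using Mc annB by blast
    then obtain c where "i2 m = \<beta> c" unfolding B_def by auto
    hence "y = \<beta> (a + c)" using y badd by simp
    hence "\<exists>x. \<beta> x = y" by blast
    thus "\<beta> (SOME x. \<beta> x = y) = y" by (rule someI_ex)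
  qed
qed

end
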